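(* Let $c_0>0$, let $\mu:[c_0,\infty)\to\mathbb{R}$ and $Q:[1,\infty)\to\mathbb{R}_{\ge 0}$ be twice differentiable, increasing and concave. For $B\ge c_0$ and $\omega\in[c_0,B]$ let $Z_B(\omega)=\mu(\omega)+Q(B/\omega)$, let $\Omega^*(B)=\arg\max_{\omega\in[c_0,B]} Z_B(\omega)$, and let $\underline{\omega}(B)=\min\Omega^*(B)$, $\overline{\omega}(B)=\max\Omega^*(B)$. (i) If $N\mapsto N\,Q'(N)$ is non-increasing on $[1,\infty)$, then both $\underline{\omega}(B)$ and $\overline{\omega}(B)$ are non-decreasing functions of $B\in[c_0,\infty)$. (ii) If in addition $N\mapsto N^2 Q'(N)$ is strictly decreasing on $[1,\infty)$, then for every $B\ge c_0$ the set $\Omega^*(B)$ is a singleton $\{\omega^\star(B)\}$, and $B\mapsto\omega^\star(B)$ is non-decreasing.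
   Context: Interpretation: $B$ is a total budget, $\omega$ a per-run budget, $\mu(\omega)$ the expected fitness of a single run with budget $\omega$, and $Q(N)$ the expected gain from taking the maximum over $N=B/\omega$ independent runs (continuous relaxation). $\Omega^*(B)$ is nonempty and compact since $Z_B$ is continuous on the compact interval $[c_0,B]$, so its minimum and maximum exist. *)

theory Defs
  imports "HOL-Analysis.Analysis"
begin

definition Zfun :: "(real \<Rightarrow> real) \<Rightarrow> (real \<Rightarrow> real) \<Rightarrow> real \<Rightarrow> real \<Rightarrow> real" where
  "Zfun \<mu> Q B \<omega> = \<mu> \<omega> + Q (B / \<omega>)"

definition Omega_star :: "(real \<Rightarrow> real) \<Rightarrow> (real \<Rightarrow> real) \<Rightarrow> real \<Rightarrow> real \<Rightarrow> real set" where
  "Omega_star \<mu> Q c0 B =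
     {\<omega> \<in> {c0..B}. \<forall>\<nu>\<in>{c0..B}. Zfun \<mu> Q B \<nu> \<le> Zfun \<mu> Q B \<omega>}"

text \<open>Smallest and largest maximiser (min / max of the compact set Omega*(B)).\<close>
definition omega_low :: "(real \<Rightarrow> real) \<Rightarrow> (real \<Rightarrow> real) \<Rightarrow> real \<Rightarrow> real \<Rightarrow> real" where
  "omega_low \<mu> Q c0 B = Inf (Omega_star \<mu> Q c0 B)"

definition omega_up :: "(real \<Rightarrow> real) \<Rightarrow> (real \<Rightarrow> real) \<Rightarrow> real \<Rightarrow> real \<Rightarrow> real" where
  "omega_up \<mu> Q c0 B = Sup (Omega_star \<mu> Q c0 B)"

end

theory Submission
  imports Defs
begin

lemma Qder_at:
  assumes "\<And>x. x \<ge> 1 \<Longrightarrow> (Q has_real_derivative Q' x) (at x within {1..})" and "x > (1::real)"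
  shows "(Q has_real_derivative Q' x) (at x)"
proof -
  have "x \<in> interior {1..}" using assms(2) by simp
  then have "at x within {1..} = at x" by (rule at_within_interior)
  with assms show ?thesis by (metis less_imp_le)
qed

lemma qder:
  assumes "\<And>x. x \<ge> 1 \<Longrightarrow> (Q has_real_derivative Q' x) (at x within {1..})"
    and "w > 0" and "B / w > (1::real)"
  shows "((\<lambda>w. Q (B / w)) has_real_derivative (- (B / w^2) * Q' (B / w))) (at w)"
proof -
  have d1: "(Q has_real_derivative Q' (B/w)) (at (B/w))" using Qder_at[OF assms(1)] assms(3) by blast
  have d2: "((\<lambda>w. B / w) has_real_derivative (- (B / w^2))) (at w)"
    using assms(2) by (auto intro!: derivative_eq_intros simp: power2_eq_square field_simps)
  from DERIV_chain2[OF d1 d2] show ?thesis by (simp add: mult.commute)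
qed

lemma Qcont:
  assumes "\<And>x. x \<ge> 1 \<Longrightarrow> (Q has_real_derivative Q' x) (at x within {1..})"
  shows "continuous_on {1..} Q"
  by (rule DERIV_continuous_on) (use assms in auto)

lemma qcont:
  assumes "continuous_on {1..} Q" "0 < a" "b \<le> (B::real)"
  shows "continuous_on {a..b} (\<lambda>w. Q (B / w))"
proof (rule continuous_on_compose2[OF assms(1)])
  show "continuous_on {a..b} (\<lambda>w. B / w)" using assms(2)
    by (intro continuous_intros) auto
  show "(\<lambda>w. B / w) ` {a..b} \<subseteq> {1..}" using assms(2,3) by (auto simp: field_simps)
qed

theorem theorem1:
  fixes c0 :: real and \<mu> \<mu>' \<mu>'' Q Q' Q'' :: "real \<Rightarrow> real"
  assumes c0_pos: "c0 > 0"
    and mu_d1: "\<And>x. x \<ge> c0 \<Longrightarrow> (\<mu> has_real_derivative \<mu>' x) (at x within {c0..})"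
    and mu_d2: "\<And>x. x \<ge> c0 \<Longrightarrow> (\<mu>' has_real_derivative \<mu>'' x) (at x within {c0..})"
    and mu_mono: "mono_on {c0..} \<mu>"
    and mu_concave: "concave_on {c0..} \<mu>"
    and Q_d1: "\<And>x. x \<ge> 1 \<Longrightarrow> (Q has_real_derivative Q' x) (at x within {1..})"
    and Q_d2: "\<And>x. x \<ge> 1 \<Longrightarrow> (Q' has_real_derivative Q'' x) (at x within {1..})"
    and Q_mono: "mono_on {1..} Q"
    and Q_concave: "concave_on {1..} Q"
    and Q_nonneg: "\<And>x. x \<ge> 1 \<Longrightarrow> Q x \<ge> 0"
    and NQ'_nonincr: "\<And>x y. 1 \<le> x \<Longrightarrow> x \<le> y \<Longrightarrow> y * Q' y \<le> x * Q' x"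
  shows "mono_on {c0..} (omega_low \<mu> Q c0) \<and> mono_on {c0..} (omega_up \<mu> Q c0)
       \<and> ((\<forall>x y. 1 \<le> x \<longrightarrow> x < y \<longrightarrow> y\<^sup>2 * Q' y < x\<^sup>2 * Q' x) \<longrightarrow>
            (\<forall>B \<ge> c0. \<exists>\<omega>. Omega_star \<mu> Q c0 B = {\<omega>})
          \<and> mono_on {c0..} (\<lambda>B. THE \<omega>. Omega_star \<mu> Q c0 B = {\<omega>}))"
proof -
  define OS where "OS = Omega_star \<mu> Q c0"
  have Qc: "continuous_on {1..} Q" by (rule Qcont[OF Q_d1])
  have muc: "continuous_on {c0..} \<mu>" by (rule DERIV_continuous_on) (use mu_d1 in auto)
  have Zc: "continuous_on {a..b} (Zfun \<mu> Q B)" if "c0 \<le> a" "b \<le> B" for a b B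
    unfolding Zfun_def
  proof (intro continuous_on_add)
    show "continuous_on {a..b} \<mu>" by (rule continuous_on_subset[OF muc]) (use that in auto)
    show "continuous_on {a..b} (\<lambda>w. Q (B / w))" by (rule qcont[OF Qc]) (use that c0_pos in auto)
  qed
  have ne: "\<exists>w. w \<in> OS B" if "B \<ge> c0" for B
  proof -
    have "\<exists>x\<in>{c0..B}. \<forall>y\<in>{c0..B}. Zfun \<mu> Q B y \<le> Zfun \<mu> Q B x"
      by (rule continuous_attains_sup) (use that Zc[of c0 B B] in auto)
    then show ?thesis unfolding OS_def Omega_star_def by auto
  qed
  have bd: "c0 \<le> w \<and> w \<le> B" if "w \<in> OS B" for w B
    using that unfolding OS_def Omega_star_def by auto
  have hmono: "Q (B2/w2) - Q (B1/w2) \<le> Q (B2/w1) - Q (B1/w1)"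
    if h: "c0 \<le> w2" "w2 < w1" "w1 \<le> B1" "B1 \<le> B2" for B1 B2 w1 w2
  proof -
    define h where "h = (\<lambda>w. Q (B2/w) - Q (B1/w))"
    define h' where "h' = (\<lambda>w. - (B2 / w^2) * Q' (B2 / w) - (- (B1 / w^2) * Q' (B1 / w)))"
    have hd: "(h has_real_derivative h' x) (at x)" if "w2 < x" "x < w1" for x
    proof -
      have "x > 0" using that h c0_pos by auto
      moreover have "B1 / x > 1" "B2 / x > 1" using that h \<open>x > 0\<close> by (auto simp: field_simps)
      ultimately show ?thesis unfolding h_def h'_def
        by (intro DERIV_diff qder[OF Q_d1]) auto
    qed
    have "continuous_on {w2..w1} h" unfolding h_def
      by (intro continuous_on_diff qcont[OF Qc]) (use h c0_pos in auto)
    then obtain l z where lz: "w2 < z" "z < w1" "(h has_real_derivative l) (at z)" "h w1 - h w2 = (w1 - w2) * l"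
      using MVT[OF h(2)] hd real_differentiable_def by meson
    have "l = h' z" using DERIV_unique[OF lz(3) hd[OF lz(1,2)]] .
    have zpos: "z > 0" using lz h c0_pos by auto
    have N1: "1 \<le> B1 / z" using lz h zpos by (auto simp: field_simps)
    have "B1 / z \<le> B2 / z" using h zpos by (simp add: divide_right_mono)
    from NQ'_nonincr[OF N1 this]
    have ineq: "(B2 / z) * Q' (B2 / z) \<le> (B1 / z) * Q' (B1 / z)" .
    have "h' z = ((B1 / z) * Q' (B1 / z) - (B2 / z) * Q' (B2 / z)) / z"
      unfolding h'_def using zpos by (simp add: field_simps power2_eq_square)
    also have "\<dots> \<ge> 0" using ineq zpos by simp
    finally have "l \<ge> 0" using \<open>l = h' z\<close> by simp
    then have "h w1 - h w2 \<ge> 0" using lz(4) h by simp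
    then show ?thesis unfolding h_def by simp
  qed
  have key: "w2 \<in> OS B1 \<and> w1 \<in> OS B2"
    if k: "c0 \<le> B1" "B1 \<le> B2" "w1 \<in> OS B1" "w2 \<in> OS B2" "w2 < w1" for B1 B2 w1 w2
  proof -
    have b1: "c0 \<le> w1" "w1 \<le> B1" using bd[OF k(3)] by auto
    have b2: "c0 \<le> w2" "w2 \<le> B2" using bd[OF k(4)] by auto
    have i1: "Zfun \<mu> Q B1 \<nu> \<le> Zfun \<mu> Q B1 w1" if "\<nu> \<in> {c0..B1}" for \<nu>
      using k(3) that unfolding OS_def Omega_star_def by auto
    have i2: "Zfun \<mu> Q B2 \<nu> \<le> Zfun \<mu> Q B2 w2" if "\<nu> \<in> {c0..B2}" for \<nu>
      using k(4) that unfolding OS_def Omega_star_def by auto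
    have a1: "Zfun \<mu> Q B1 w2 \<le> Zfun \<mu> Q B1 w1" using i1 b2 k b1 by auto
    have a2: "Zfun \<mu> Q B2 w1 \<le> Zfun \<mu> Q B2 w2" using i2 b1 k by auto
    have hm: "Q (B2/w2) - Q (B1/w2) \<le> Q (B2/w1) - Q (B1/w1)"
      using hmono[OF b2(1) k(5) b1(2) k(2)] .
    have e1: "Zfun \<mu> Q B1 w1 \<le> Zfun \<mu> Q B1 w2" using a1 a2 hm unfolding Zfun_def by linarith
    have e2: "Zfun \<mu> Q B2 w2 \<le> Zfun \<mu> Q B2 w1" using a1 a2 hm unfolding Zfun_def by linarith
    have "w2 \<in> OS B1" unfolding OS_def Omega_star_def using b2 k b1 i1 e1 by force
    moreover have "w1 \<in> OS B2" unfolding OS_def Omega_star_def using b1 k i2 e2 by force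
    ultimately show ?thesis by simp
  qed
  have low: "mono_on {c0..} (omega_low \<mu> Q c0)"
  proof (rule mono_onI)
    fix B1 B2 assume B: "B1 \<in> {c0..}" "B2 \<in> {c0..}" "B1 \<le> B2"
    obtain w1 where w1: "w1 \<in> OS B1" using ne[of B1] B by auto
    have bb: "bdd_below (OS B1)" using bd by (auto intro: bdd_belowI[of _ c0])
    have "Inf (OS B1) \<le> Inf (OS B2)"
    proof (rule cInf_greatest)
      show "OS B2 \<noteq> {}" using ne[of B2] B by auto
      fix w2 assume w2: "w2 \<in> OS B2"
      show "Inf (OS B1) \<le> w2"
      proof (cases "w2 < w1")
        case True
        then have "w2 \<in> OS B1" using key[of B1 B2 w1 w2] B w1 w2 by auto
        then show ?thesis using cInf_lower[OF _ bb] by auto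
      next
        case False
        then show ?thesis using cInf_lower[OF w1 bb] by auto
      qed
    qed
    then show "omega_low \<mu> Q c0 B1 \<le> omega_low \<mu> Q c0 B2" unfolding omega_low_def OS_def by simp
  qed
  have up: "mono_on {c0..} (omega_up \<mu> Q c0)"
  proof (rule mono_onI)
    fix B1 B2 assume B: "B1 \<in> {c0..}" "B2 \<in> {c0..}" "B1 \<le> B2"
    obtain w2 where w2: "w2 \<in> OS B2" using ne[of B2] B by auto
    have bb: "bdd_above (OS B2)" using bd by (auto intro: bdd_aboveI[of _ B2])
    have "Sup (OS B1) \<le> Sup (OS B2)"
    proof (rule cSup_least)
      show "OS B1 \<noteq> {}" using ne[of B1] B by auto
      fix w1 assume w1: "w1 \<in> OS B1"
      show "w1 \<le> Sup (OS B2)"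
      proof (cases "w2 < w1")
        case True
        then have "w1 \<in> OS B2" using key[of B1 B2 w1 w2] B w1 w2 by auto
        then show ?thesis using cSup_upper[OF _ bb] by auto
      next
        case False
        then show ?thesis using cSup_upper[OF w2 bb] by auto
      qed
    qed
    then show "omega_up \<mu> Q c0 B1 \<le> omega_up \<mu> Q c0 B2" unfolding omega_up_def OS_def by simp
  qed
  have part2: "(\<forall>B \<ge> c0. \<exists>\<omega>. Omega_star \<mu> Q c0 B = {\<omega>})
          \<and> mono_on {c0..} (\<lambda>B. THE \<omega>. Omega_star \<mu> Q c0 B = {\<omega>})"
    if strict: "\<forall>x y. 1 \<le> x \<longrightarrow> x < y \<longrightarrow> y\<^sup>2 * Q' y < x\<^sup>2 * Q' x"
  proof -
    have uniq: False if u: "B \<ge> c0" "a \<in> OS B" "b \<in> OS B" "a < b" for B a b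
    proof -
      define m where "m = (a + b) / 2"
      have ba: "c0 \<le> a" "a \<le> B" using bd[OF u(2)] by auto
      have bb: "c0 \<le> b" "b \<le> B" using bd[OF u(3)] by auto
      have am: "a < m" "m < b" using u(4) unfolding m_def by auto
      define q where "q = (\<lambda>w. Q (B / w))"
      define q' where "q' = (\<lambda>w. - (B / w^2) * Q' (B / w))"
      have qd: "(q has_real_derivative q' x) (at x)" if "a < x" "x < b" for x
      proof -
        have "x > 0" using that ba c0_pos by auto
        moreover have "B / x > 1" using that bb \<open>x > 0\<close> by (auto simp: field_simps)
        ultimately show ?thesis unfolding q_def q'_def by (intro qder[OF Q_d1]) auto
      qed
      have qc: "continuous_on {x..y} q" if "a \<le> x" "y \<le> b" for x y
        unfolding q_def by (rule qcont[OF Qc]) (use that ba bb c0_pos in auto)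
      obtain l1 z1 where lz1: "a < z1" "z1 < m" "(q has_real_derivative l1) (at z1)" "q m - q a = (m - a) * l1"
      proof -
        have c: "continuous_on {a..m} q" using qc am by simp
        have d: "q differentiable (at x)" if "a < x" "x < m" for x
          using qd[of x] that am unfolding real_differentiable_def by force
        from MVT[OF am(1) c d] show ?thesis using that by blast
      qed
      obtain l2 z2 where lz2: "m < z2" "z2 < b" "(q has_real_derivative l2) (at z2)" "q b - q m = (b - m) * l2"
      proof -
        have c: "continuous_on {m..b} q" using qc am by simp
        have d: "q differentiable (at x)" if "m < x" "x < b" for x
          using qd[of x] that am unfolding real_differentiable_def by force
        from MVT[OF am(2) c d] show ?thesis using that by blast
      qed
      have l1: "l1 = q' z1" using DERIV_unique[OF lz1(3) qd] lz1 am by auto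
      have l2: "l2 = q' z2" using DERIV_unique[OF lz2(3) qd] lz2 am by auto
      have Bpos: "B > 0" using ba c0_pos by auto
      have z1p: "z1 > 0" and z2p: "z2 > 0" using lz1 lz2 ba c0_pos by auto
      have N2: "1 \<le> B / z2" using lz2 bb z2p by (auto simp: field_simps)
      have N12: "B / z2 < B / z1" using lz1 lz2 Bpos z1p by (auto intro: divide_strict_left_mono)
      have s: "(B / z1)\<^sup>2 * Q' (B / z1) < (B / z2)\<^sup>2 * Q' (B / z2)"
        using strict N2 N12 by blast
      have qz: "q' z = - ((B / z)\<^sup>2 * Q' (B / z)) / B" if "z > 0" for z
        unfolding q'_def using that Bpos by (simp add: field_simps power2_eq_square)
      have "q' z2 < q' z1" unfolding qz[OF z1p] qz[OF z2p] using s Bpos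
        by (simp add: divide_strict_right_mono)
      then have "l2 < l1" using l1 l2 by simp
      moreover have "b - m = m - a" "m - a > 0" using u(4) by (simp_all add: m_def field_simps)
      ultimately have qs: "q a + q b < 2 * q m"
      proof -
        have "(m - a) * l2 < (m - a) * l1" using \<open>l2 < l1\<close> \<open>m - a > 0\<close> by simp
        moreover have "q b - q m = (m - a) * l2" using lz2(4) \<open>b - m = m - a\<close> by simp
        ultimately show ?thesis using lz1(4) by linarith
      qed
      have "\<mu> ((1/2) *\<^sub>R a + (1/2) *\<^sub>R b) \<ge> (1/2) * \<mu> a + (1/2) * \<mu> b"
      proof -
        have cc: "\<forall>x\<in>{c0..}. \<forall>y\<in>{c0..}. \<forall>u\<ge>0. \<forall>v\<ge>0. u + v = 1 \<longrightarrow> u * \<mu> x + v * \<mu> y \<le> \<mu> (u *\<^sub>R x + v *\<^sub>R y)"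
          using mu_concave unfolding concave_on_iff by blast
        have "(1/2) * \<mu> a + (1/2) * \<mu> b \<le> \<mu> ((1/2) *\<^sub>R a + (1/2) *\<^sub>R b)"
          using cc[rule_format, of a b "1/2" "1/2"] ba bb by simp
        then show ?thesis by simp
      qed
      then have mus: "\<mu> a + \<mu> b \<le> 2 * \<mu> m" unfolding m_def by (simp add: field_simps)
      have "m \<in> {c0..B}" using am ba bb by auto
      then have "Zfun \<mu> Q B m \<le> Zfun \<mu> Q B a" "Zfun \<mu> Q B m \<le> Zfun \<mu> Q B b"
        using u unfolding OS_def Omega_star_def by auto
      then show False using qs mus unfolding Zfun_def q_def by linarith
    qed
    have single: "OS B = {Inf (OS B)}" if Bc: "B \<ge> c0" for B
    proof -
      obtain w where w: "w \<in> OS B" using ne[OF Bc] by auto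
      have "OS B = {w}"
      proof
        show "{w} \<subseteq> OS B" using w by simp
        show "OS B \<subseteq> {w}"
        proof
          fix v assume v: "v \<in> OS B"
          show "v \<in> {w}"
          proof (cases "v = w")
            case False
            have "\<not> v < w" "\<not> w < v" using uniq[OF Bc v w] uniq[OF Bc w v] by blast+
            with False show ?thesis by linarith
          qed simp
        qed
      qed
      then show ?thesis by simp
    qed
    have the_eq: "(THE \<omega>. OS B = {\<omega>}) = omega_low \<mu> Q c0 B" if "B \<ge> c0" for B
    proof -
      have "(THE \<omega>. OS B = {\<omega>}) = Inf (OS B)"
        by (rule the_equality) (use single[OF that] in auto)
      then show ?thesis unfolding omega_low_def OS_def by simp
    qed
    show ?thesis
    proof
      show "\<forall>B \<ge> c0. \<exists>\<omega>. Omega_star \<mu> Q c0 B = {\<omega>}" using single unfolding OS_def by blast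
      show "mono_on {c0..} (\<lambda>B. THE \<omega>. Omega_star \<mu> Q c0 B = {\<omega>})"
      proof (rule mono_onI)
        fix B1 B2 assume B: "B1 \<in> {c0..}" "B2 \<in> {c0..}" "B1 \<le> B2"
        then show "(THE \<omega>. Omega_star \<mu> Q c0 B1 = {\<omega>}) \<le> (THE \<omega>. Omega_star \<mu> Q c0 B2 = {\<omega>})"
          using the_eq[of B1] the_eq[of B2] mono_onD[OF low B] unfolding OS_def by simp
      qed
    qed
  qed
  show ?thesis using low up part2 by blast
qed

end
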